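(* Let $E$, $F$ be locally convex spaces and let $\phi_{1},\phi_{2}:E\times F\to\overline{\mathbb{R}}$ be proper convex functions. Define $\rho:E\times F\to\overline{\mathbb{R}}$ by $\rho(x,y):=\inf\{\phi_{1}(x,y_{1})+\phi_{2}(x,y_{2})\mid y_{1}+y_{2}=y\}$. Assume there exists $(x_{0},y_{0})\in\operatorname{dom}\phi_{2}$ such that $x_{0}\in\operatorname{Pr}_{E}(\operatorname{dom}\phi_{1})$ and $\phi_{2}(\cdot,y_{0})$ is continuous at $x_{0}$. Then for every $x^{*}\in E^{*}$, $y^{*}\in F^{*}$, \[\rho^{*}(x^{*},y^{*})=\min\{\phi_{1}^{*}(x_{1}^{*},y^{*})+\phi_{2}^{*}(x_{2}^{*},y^{*})\mid x_{1}^{*},x_2^*\in E^*,\ x_{1}^{*}+x_{2}^{*}=x^{*}\},\] where "$\min$" denotes an infimum that is attained when it is finite.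
   Context: Locally convex spaces are Hausdorff; $E^*,F^*$ are topological duals and the conjugate of $f:E\times F\to\overline{\mathbb R}$ is $f^*(x^*,y^* )=\sup\{\langle x,x^*\rangle+\langle y,y^*\rangle-f(x,y)\}$. $\operatorname{dom}\phi=\{\phi<\infty\}$; $\operatorname{Pr}_E$ is the projection onto $E$; proper means not identically $+\infty$ and never $-\infty$. *)

theory Defs
  imports "HOL-Analysis.Analysis"
begin

definition locally_convex_space :: "('a::{real_vector,t2_space}) itself \<Rightarrow> bool" where
  "locally_convex_space _ \<longleftrightarrow>
     continuous_on UNIV (\<lambda>p::'a \<times> 'a. fst p + snd p) \<and>
     continuous_on UNIV (\<lambda>p::real \<times> 'a. fst p *\<^sub>R snd p) \<and>
     (\<forall>(x::'a) U. open U \<and> x \<in> U \<longrightarrow> (\<exists>V. open V \<and> convex V \<and> x \<in> V \<and> V \<subseteq> U))"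

definition topdual :: "('a::{real_vector,topological_space} \<Rightarrow> real) set" where
  "topdual = {f. linear f \<and> continuous_on UNIV f}"

definition convex_efun :: "('a::real_vector \<Rightarrow> ereal) \<Rightarrow> bool" where
  "convex_efun f \<longleftrightarrow> convex {(x, r::real). f x \<le> ereal r}"

definition proper_efun :: "('a \<Rightarrow> ereal) \<Rightarrow> bool" where
  "proper_efun f \<longleftrightarrow> (\<forall>x. f x \<noteq> -\<infinity>) \<and> (\<exists>x. f x \<noteq> \<infinity>)"

definition edom :: "('a \<Rightarrow> ereal) \<Rightarrow> 'a set" where
  "edom f = {x. f x < \<infinity>}"

definition conj2 :: "('a \<times> 'b \<Rightarrow> ereal) \<Rightarrow> ('a \<Rightarrow> real) \<Rightarrow> ('b \<Rightarrow> real) \<Rightarrow> ereal" where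
  "conj2 f xs ys = (SUP p. ereal (xs (fst p) + ys (snd p)) - f p)"

end

theory Submission
  imports Defs
begin


definition sublin :: "('v::real_vector \<Rightarrow> real) \<Rightarrow> bool" where
  "sublin q \<longleftrightarrow> (\<forall>x y. q (x + y) \<le> q x + q y) \<and> (\<forall>t x. 0 \<le> t \<longrightarrow> q (t *\<^sub>R x) = t * q x)"

lemma sublin_add: "sublin q \<Longrightarrow> q (x + y) \<le> q x + q y"
  unfolding sublin_def by blast

lemma sublin_hom: "sublin q \<Longrightarrow> 0 \<le> t \<Longrightarrow> q (t *\<^sub>R x) = t * q x"
  unfolding sublin_def by blast

lemma sublin_0: "sublin q \<Longrightarrow> q 0 = 0"
  using sublin_hom[of q 0 0] by simp

lemma sublin_neg: "sublin q \<Longrightarrow> - q (- x) \<le> q x"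
  using sublin_add[of q x "-x"] sublin_0[of q] by simp

lemma cInf_scale:
  fixes X :: "real set"
  assumes "X \<noteq> {}" "bdd_below X" "0 < t"
  shows "Inf ((\<lambda>z. t * z) ` X) = t * Inf X"
proof (rule antisym)
  have bb: "bdd_below ((\<lambda>z. t * z) ` X)"
    using assms(2,3) unfolding bdd_below_def
    by (metis imageE less_eq_real_def mult_le_cancel_left_pos)
  have "Inf ((\<lambda>z. t * z) ` X) / t \<le> Inf X"
  proof (rule cInf_greatest[OF assms(1)])
    fix x assume "x \<in> X"
    then have "Inf ((\<lambda>z. t * z) ` X) \<le> t * x" by (intro cInf_lower[OF _ bb]) auto
    then show "Inf ((\<lambda>z. t * z) ` X) / t \<le> x" using assms(3) by (simp add: divide_simps mult.commute)
  qed
  then show "Inf ((\<lambda>z. t * z) ` X) \<le> t * Inf X" using assms(3) by (simp add: divide_simps mult.commute)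
  show "t * Inf X \<le> Inf ((\<lambda>z. t * z) ` X)"
  proof (rule cInf_greatest)
    show "(\<lambda>z. t * z) ` X \<noteq> {}" using assms(1) by simp
    fix y assume "y \<in> (\<lambda>z. t * z) ` X"
    then obtain x where "x \<in> X" "y = t * x" by auto
    then show "t * Inf X \<le> y" using cInf_lower[OF _ assms(2)] assms(3) by simp
  qed
qed

lemma Q_lemma:
  fixes q :: "'v::real_vector \<Rightarrow> real"
  assumes q: "sublin q" and c: "c \<le> q a"
  assumes Q_def: "Q = (\<lambda>x. Inf ((\<lambda>t. q (x + t *\<^sub>R a) - t * c) ` {0..}))"
  shows "sublin Q" "\<And>x. Q x \<le> q x" "\<And>x. Q x \<le> q (x + a) - c"
proof -
  have bd: "- q (- x) \<le> q (x + t *\<^sub>R a) - t * c" if "0 \<le> t" for x t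
  proof -
    have "q (t *\<^sub>R a) \<le> q (x + t *\<^sub>R a) + q (- x)"
      using sublin_add[OF q, of "x + t *\<^sub>R a" "-x"] by simp
    moreover have "q (t *\<^sub>R a) = t * q a" using sublin_hom[OF q that] .
    moreover have "t * c \<le> t * q a" using c that by (simp add: mult_left_mono)
    ultimately show ?thesis by linarith
  qed
  have bb: "bdd_below ((\<lambda>t. q (x + t *\<^sub>R a) - t * c) ` {0..})" for x
    using bd unfolding bdd_below_def by auto
  have ne: "(\<lambda>t. q (x + t *\<^sub>R a) - t * c) ` {0..} \<noteq> {}" for x by auto
  have low: "Q x \<le> q (x + t *\<^sub>R a) - t * c" if "0 \<le> t" for x t
    unfolding Q_def by (rule cInf_lower[OF _ bb]) (use that in auto)
  have grt: "y \<le> Q x" if "\<And>t. 0 \<le> t \<Longrightarrow> y \<le> q (x + t *\<^sub>R a) - t * c" for x y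
    unfolding Q_def by (rule cInf_greatest[OF ne]) (use that in auto)
  show "Q x \<le> q x" for x using low[of 0 x] by simp
  show "Q x \<le> q (x + a) - c" for x using low[of 1 x] by simp
  have add: "Q (x + y) \<le> Q x + Q y" for x y
  proof -
    have "Q (x + y) - (q (y + t2 *\<^sub>R a) - t2 * c) \<le> Q x" if t2: "0 \<le> t2" for t2
    proof (rule grt)
      fix t1 :: real assume t1: "0 \<le> t1"
      have "Q (x + y) \<le> q ((x + y) + (t1 + t2) *\<^sub>R a) - (t1 + t2) * c"
        using low t1 t2 by simp
      also have "(x + y) + (t1 + t2) *\<^sub>R a = (x + t1 *\<^sub>R a) + (y + t2 *\<^sub>R a)"
        by (simp add: algebra_simps)
      finally show "Q (x + y) - (q (y + t2 *\<^sub>R a) - t2 * c) \<le> q (x + t1 *\<^sub>R a) - t1 * c"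
        using sublin_add[OF q, of "x + t1 *\<^sub>R a" "y + t2 *\<^sub>R a"] by (simp add: algebra_simps)
    qed
    then have "Q (x + y) - Q x \<le> Q y" by (intro grt) (simp add: algebra_simps)
    then show ?thesis by simp
  qed
  have hom: "Q (s *\<^sub>R x) = s * Q x" if s: "0 \<le> s" for s x
  proof (cases "s = 0")
    case True
    have "Q 0 = 0"
    proof (rule antisym)
      show "Q 0 \<le> 0" using low[of 0 0] sublin_0[OF q] by simp
      show "0 \<le> Q 0"
      proof (rule grt)
        fix t :: real assume t: "0 \<le> t"
        have "q (0 + t *\<^sub>R a) = t * q a" using sublin_hom[OF q t] by simp
        moreover have "t * c \<le> t * q a" using c t by (simp add: mult_left_mono)
        ultimately show "0 \<le> q (0 + t *\<^sub>R a) - t * c" by simp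
      qed
    qed
    then show ?thesis using True by simp
  next
    case False
    then have s': "0 < s" using s by simp
    have eq: "q (s *\<^sub>R x + t *\<^sub>R a) - t * c = s * (q (x + (t / s) *\<^sub>R a) - (t / s) * c)" for t
    proof -
      have "s *\<^sub>R x + t *\<^sub>R a = s *\<^sub>R (x + (t / s) *\<^sub>R a)" using s' by (simp add: algebra_simps)
      then have "q (s *\<^sub>R x + t *\<^sub>R a) = s * q (x + (t / s) *\<^sub>R a)"
        using sublin_hom[OF q s] by simp
      then show ?thesis using s' by (simp add: algebra_simps)
    qed
    show ?thesis
    proof (rule antisym)
      have "Q (s *\<^sub>R x) / s \<le> Q x"
      proof (rule grt)
        fix t :: real assume t: "0 \<le> t"
        have "Q (s *\<^sub>R x) \<le> q (s *\<^sub>R x + (s * t) *\<^sub>R a) - (s * t) * c"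
          using low t s by simp
        also have "\<dots> = s * (q (x + t *\<^sub>R a) - t * c)" using eq[of "s * t"] s' by simp
        finally show "Q (s *\<^sub>R x) / s \<le> q (x + t *\<^sub>R a) - t * c"
          using s' by (simp add: divide_simps mult.commute)
      qed
      then show "Q (s *\<^sub>R x) \<le> s * Q x" using s' by (simp add: divide_simps mult.commute)
      show "s * Q x \<le> Q (s *\<^sub>R x)"
      proof (rule grt)
        fix t :: real assume t: "0 \<le> t"
        have "Q x \<le> q (x + (t / s) *\<^sub>R a) - (t / s) * c" using low[of "t / s" x] t s' by simp
        then have "s * Q x \<le> s * (q (x + (t / s) *\<^sub>R a) - (t / s) * c)"
          using s by (simp add: mult_left_mono)
        then show "s * Q x \<le> q (s *\<^sub>R x + t *\<^sub>R a) - t * c" using eq[of t] by simp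
      qed
    qed
  qed
  show "sublin Q" unfolding sublin_def using add hom by blast
qed

lemma sublin_min_linear:
  fixes m :: "'v::real_vector \<Rightarrow> real"
  assumes m: "sublin m" and super: "\<And>x a. m x \<le> m (x + a) - m a"
  shows "linear m"
proof -
  have add: "m (x + y) = m x + m y" for x y
    using super[of x y] sublin_add[OF m, of x y] by simp
  have neg: "m (- x) = - m x" for x
    using add[of x "-x"] sublin_0[OF m] by simp
  show ?thesis
  proof (rule linearI)
    show "m (b1 + b2) = m b1 + m b2" for b1 b2 by (rule add)
    fix r :: real and b
    show "m (r *\<^sub>R b) = r *\<^sub>R m b"
    proof (cases "0 \<le> r")
      case True then show ?thesis using sublin_hom[OF m True] by simp
    next
      case False
      then have "m (r *\<^sub>R b) = m (- ((- r) *\<^sub>R b))" by simp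
      also have "\<dots> = - ((- r) * m b)" using neg sublin_hom[OF m, of "-r" b] False by simp
      finally show ?thesis by simp
    qed
  qed
qed

lemma HB:
  fixes p :: "'v::real_vector \<Rightarrow> real"
  assumes p: "sublin p" and pw: "1 \<le> p w"
  shows "\<exists>L::'v \<Rightarrow> real. linear L \<and> (\<forall>x. L x \<le> p x) \<and> 1 \<le> L w"
proof -
  define p0 where "p0 = (\<lambda>x. Inf ((\<lambda>t. p (x + t *\<^sub>R w) - t * 1) ` {0..}))"
  note Q = Q_lemma[OF p pw p0_def]
  have "p0 (- w) \<le> p (- w + w) - 1" by (rule Q(3)[of "- w"])
  then have p0w: "p0 (- w) \<le> - 1" using sublin_0[OF p] by simp
  define S where "S = {q. sublin q \<and> (\<forall>x. q x \<le> p0 x) \<and> q (- w) \<le> - 1}"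
  define P where "P = (\<lambda>q1 q2 :: 'v \<Rightarrow> real. \<forall>x. q2 x \<le> q1 x)"
  have p0S: "p0 \<in> S" unfolding S_def using Q(1) p0w by auto
  have po: "partial_order_on S (relation_of P S)"
  proof (rule partial_order_on_relation_ofI)
    show "P a a" for a unfolding P_def by simp
    show "P a c" if "P a b" "P b c" for a b c using that unfolding P_def by (meson order_trans)
    show "a = b" if "P a b" "P b a" for a b
    proof (rule ext)
      fix x show "a x = b x" using that unfolding P_def by (meson antisym)
    qed
  qed
  have "\<exists>m\<in>S. \<forall>a\<in>S. P m a \<longrightarrow> a = m"
  proof (rule predicate_Zorn[OF po])
    fix C assume C: "C \<in> Chains (relation_of P S)"
    have CS: "C \<subseteq> S" using C unfolding Chains_def relation_of_def by auto
    have cmp: "\<And>q1 q2. q1 \<in> C \<Longrightarrow> q2 \<in> C \<Longrightarrow> P q1 q2 \<or> P q2 q1"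
      using C unfolding Chains_def relation_of_def by auto
    show "\<exists>u\<in>S. \<forall>a\<in>C. P a u"
    proof (cases "C = {}")
      case True then show ?thesis using p0S by auto
    next
      case False
      define m where "m = (\<lambda>x. Inf ((\<lambda>q. q x) ` C))"
      have sub: "q \<in> C \<Longrightarrow> sublin q" for q using CS unfolding S_def by auto
      have qp0: "q \<in> C \<Longrightarrow> q x \<le> p0 x" for q x using CS unfolding S_def by auto
      have bb: "bdd_below ((\<lambda>q. q x) ` C)" for x
      proof (rule bdd_belowI)
        fix z assume "z \<in> (\<lambda>q. q x) ` C"
        then obtain q where q: "q \<in> C" "z = q x" by auto
        show "- p0 (- x) \<le> z" using sublin_neg[OF sub[OF q(1)], of x] qp0[OF q(1), of "- x"] q(2) by linarith
      qed
      have ne: "(\<lambda>q. q x) ` C \<noteq> {}" for x using False by auto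
      have low: "q \<in> C \<Longrightarrow> m x \<le> q x" for q x
        unfolding m_def by (rule cInf_lower[OF _ bb]) auto
      have grt: "(\<And>q. q \<in> C \<Longrightarrow> y \<le> q x) \<Longrightarrow> y \<le> m x" for x y
        unfolding m_def by (rule cInf_greatest[OF ne]) auto
      have madd: "m (x + y) \<le> m x + m y" for x y
      proof -
        have "m (x + y) - q2 y \<le> m x" if q2: "q2 \<in> C" for q2
        proof (rule grt)
          fix q1 assume q1: "q1 \<in> C"
          show "m (x + y) - q2 y \<le> q1 x"
          proof (cases "P q1 q2")
            case True
            then have "m (x + y) \<le> q2 x + q2 y" using low[OF q2, of "x + y"] sublin_add[OF sub[OF q2], of x y] by linarith
            moreover have "q2 x \<le> q1 x" using True unfolding P_def by blast
            ultimately show ?thesis by linarith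
          next
            case False
            then have "P q2 q1" using cmp q1 q2 by blast
            then have "m (x + y) \<le> q1 x + q1 y" using low[OF q1, of "x + y"] sublin_add[OF sub[OF q1], of x y] by linarith
            moreover have "q1 y \<le> q2 y" using \<open>P q2 q1\<close> unfolding P_def by blast
            ultimately show ?thesis by linarith
          qed
        qed
        then have "m (x + y) - m x \<le> m y" by (intro grt) (simp add: algebra_simps)
        then show ?thesis by simp
      qed
      have mhom: "m (t *\<^sub>R x) = t * m x" if t: "0 \<le> t" for t x
      proof (cases "t = 0")
        case True
        obtain q0 where q0: "q0 \<in> C" using False by auto
        have "(\<lambda>q. q 0) ` C = {0}" using sublin_0[OF sub] q0 by force
        then show ?thesis using True unfolding m_def by simp
      next
        case False
        then have t': "0 < t" using t by simp
        have "(\<lambda>q. q (t *\<^sub>R x)) ` C = (\<lambda>z. t * z) ` ((\<lambda>q. q x) ` C)"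
          using sublin_hom[OF sub t] by (auto simp: image_image)
        then show ?thesis unfolding m_def using cInf_scale[OF ne bb t'] by simp
      qed
      have "sublin m" unfolding sublin_def using madd mhom by blast
      moreover obtain q0 where q0: "q0 \<in> C" using False by auto
      moreover have "m x \<le> p0 x" for x using low[OF q0, of x] qp0[OF q0, of x] by linarith
      moreover have "m (- w) \<le> - 1"
      proof -
        have "q0 (- w) \<le> - 1" using q0 CS unfolding S_def by blast
        then show ?thesis using low[OF q0, of "-w"] by linarith
      qed
      ultimately have "m \<in> S" unfolding S_def by blast
      moreover have "\<forall>a\<in>C. P a m" unfolding P_def using low by blast
      ultimately show ?thesis by blast
    qed
  qed
  then obtain m where mS: "m \<in> S" and mmin: "\<And>a. a \<in> S \<Longrightarrow> P m a \<Longrightarrow> a = m" by blast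
  have msub: "sublin m" and mp0: "\<And>x. m x \<le> p0 x" and mw: "m (- w) \<le> - 1"
    using mS unfolding S_def by auto
  have super: "m x \<le> m (x + a) - m a" for x a
  proof -
    define Qa where "Qa = (\<lambda>x. Inf ((\<lambda>t. m (x + t *\<^sub>R a) - t * m a) ` {0..}))"
    note QQ = Q_lemma[OF msub order_refl Qa_def]
    have "Qa x \<le> p0 x" for x using QQ(2)[of x] mp0[of x] by linarith
    moreover have "Qa (- w) \<le> - 1" using QQ(2)[of "- w"] mw by linarith
    ultimately have "Qa \<in> S" unfolding S_def using QQ(1) by blast
    moreover have "P m Qa" unfolding P_def using QQ(2) by blast
    ultimately have "Qa = m" using mmin by blast
    then show ?thesis using QQ(3)[of x] by simp
  qed
  have "linear m" by (rule sublin_min_linear[OF msub super])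
  moreover have "m x \<le> p x" for x using mp0[of x] Q(2)[of x] by simp
  moreover have "1 \<le> m w"
  proof -
    have "m (- w) = - m w" using \<open>linear m\<close> by (simp add: linear_neg)
    then show ?thesis using mw by simp
  qed
  ultimately show ?thesis by blast
qed

lemma convex_scale0:
  assumes "convex K" "0 \<in> K" "x \<in> K" "0 \<le> c" "c \<le> 1"
  shows "c *\<^sub>R x \<in> K"
  using convexD[OF assms(1) assms(3) assms(2), of c "1 - c"] assms(4,5) by simp

lemma SEP:
  fixes K :: "'v::real_vector set"
  assumes K: "convex K" and K0: "0 \<in> K" and absorb: "\<And>v. \<exists>c>0. c *\<^sub>R v \<in> K"
    and w: "w \<notin> K"
  shows "\<exists>L::'v \<Rightarrow> real. linear L \<and> (\<forall>k\<in>K. L k \<le> 1) \<and> 1 \<le> L w"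
proof -
  define T where "T = (\<lambda>v. {s::real. 0 < s \<and> inverse s *\<^sub>R v \<in> K})"
  define p where "p = (\<lambda>v. Inf (T v))"
  have up: "s' \<in> T v" if "s \<in> T v" "s \<le> s'" for s s' v
  proof -
    have s: "0 < s" "inverse s *\<^sub>R v \<in> K" using that(1) unfolding T_def by auto
    then have s': "0 < s'" using that(2) by simp
    have "(s / s') *\<^sub>R (inverse s *\<^sub>R v) \<in> K"
      by (rule convex_scale0[OF K K0 s(2)]) (use s s' that(2) in auto)
    moreover have "(s / s') *\<^sub>R (inverse s *\<^sub>R v) = inverse s' *\<^sub>R v"
      using s s' by (simp add: field_simps)
    ultimately show ?thesis unfolding T_def using s' by auto
  qed
  have ne: "T v \<noteq> {}" for v
  proof -
    obtain c where "c > 0" "c *\<^sub>R v \<in> K" using absorb by blast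
    then have "inverse c \<in> T v" unfolding T_def by auto
    then show ?thesis by blast
  qed
  have bb: "bdd_below (T v)" for v unfolding T_def bdd_below_def by (auto intro: less_imp_le)
  have pnn: "0 \<le> p v" for v unfolding p_def by (rule cInf_greatest[OF ne]) (auto simp: T_def)
  have gt: "s \<in> T v" if "p v < s" for s v
  proof -
    have "Inf (T v) < s" using that unfolding p_def .
    then obtain s0 where "s0 \<in> T v" "s0 < s" using cInf_less_iff[OF ne bb] by blast
    then show ?thesis using up by (meson less_imp_le)
  qed
  have padd: "p (x + y) \<le> p x + p y" for x y
  proof (rule field_le_epsilon)
    fix e :: real assume e: "0 < e"
    define s where "s = p x + e / 2"
    define t where "t = p y + e / 2"
    have sT: "s \<in> T x" and tT: "t \<in> T y" using gt e unfolding s_def t_def by auto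
    have s0: "0 < s" and t0: "0 < t" using pnn e unfolding s_def t_def by (auto intro: add_nonneg_pos)
    have "(s / (s + t)) *\<^sub>R (inverse s *\<^sub>R x) + (t / (s + t)) *\<^sub>R (inverse t *\<^sub>R y) \<in> K"
      by (rule convexD[OF K]) (use sT tT s0 t0 in \<open>auto simp: T_def add_divide_distrib[symmetric]\<close>)
    moreover have "(s / (s + t)) *\<^sub>R (inverse s *\<^sub>R x) + (t / (s + t)) *\<^sub>R (inverse t *\<^sub>R y)
        = inverse (s + t) *\<^sub>R (x + y)"
      using s0 t0 by (simp add: field_simps scaleR_add_right)
    ultimately have "s + t \<in> T (x + y)" unfolding T_def using s0 t0 by auto
    then have "p (x + y) \<le> s + t" unfolding p_def by (rule cInf_lower[OF _ bb])
    then show "p (x + y) \<le> p x + p y + e" unfolding s_def t_def by simp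
  qed
  have phom: "p (t *\<^sub>R x) = t * p x" if t: "0 \<le> t" for t x
  proof (cases "t = 0")
    case True
    have "T 0 = {0<..}" unfolding T_def using K0 by auto
    then show ?thesis using True unfolding p_def by simp
  next
    case False
    then have t': "0 < t" using t by simp
    have "T (t *\<^sub>R x) = (\<lambda>z. t * z) ` T x"
    proof (intro set_eqI iffI)
      fix s assume "s \<in> T (t *\<^sub>R x)"
      then have "s / t \<in> T x" using t' unfolding T_def by (auto simp: field_simps)
      moreover have "s = t * (s / t)" using t' by simp
      ultimately show "s \<in> (\<lambda>z. t * z) ` T x" by blast
    next
      fix s assume "s \<in> (\<lambda>z. t * z) ` T x"
      then obtain z where "z \<in> T x" "s = t * z" by auto
      then show "s \<in> T (t *\<^sub>R x)" using t' unfolding T_def by (auto simp: field_simps)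
    qed
    then show ?thesis unfolding p_def using cInf_scale[OF ne bb t'] by simp
  qed
  have "sublin p" unfolding sublin_def using padd phom by blast
  moreover have "1 \<le> p w"
  proof (rule ccontr)
    assume "\<not> 1 \<le> p w"
    then have "1 \<in> T w" using gt by simp
    then show False using w unfolding T_def by simp
  qed
  ultimately obtain L where L: "linear L" "\<And>x. L x \<le> p x" "1 \<le> L w" using HB by blast
  have "p k \<le> 1" if "k \<in> K" for k
    unfolding p_def by (rule cInf_lower[OF _ bb]) (use that in \<open>auto simp: T_def\<close>)
  then have "\<forall>k\<in>K. L k \<le> 1" using L(2) by (meson order_trans)
  then show ?thesis using L(1,3) by (intro exI[of _ L] conjI)
qed



lemma lcs_comp:
  assumes "continuous_on UNIV g" "continuous_on UNIV f"
  shows "continuous_on UNIV (\<lambda>x. g (f x))"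
  using continuous_on_compose[OF assms(2) continuous_on_subset[OF assms(1)]] by (simp add: o_def)

lemma lcs_scale:
  assumes "locally_convex_space TYPE('a::{real_vector,t2_space})"
  shows "continuous_on UNIV (\<lambda>v::'a. c *\<^sub>R v)"
proof -
  have "continuous_on UNIV (\<lambda>p::real \<times> 'a. fst p *\<^sub>R snd p)"
    using assms unfolding locally_convex_space_def by blast
  from lcs_comp[OF this, of "\<lambda>v. (c, v)"] show ?thesis
    by (simp add: continuous_on_Pair continuous_on_const continuous_on_id)
qed

lemma lcs_scale2:
  assumes "locally_convex_space TYPE('a::{real_vector,t2_space})"
  shows "continuous_on UNIV (\<lambda>c::real. c *\<^sub>R (v::'a))"
proof -
  have "continuous_on UNIV (\<lambda>p::real \<times> 'a. fst p *\<^sub>R snd p)"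
    using assms unfolding locally_convex_space_def by blast
  from lcs_comp[OF this, of "\<lambda>c. (c, v)"] show ?thesis
    by (simp add: continuous_on_Pair continuous_on_const continuous_on_id)
qed

lemma lcs_trans:
  assumes "locally_convex_space TYPE('a::{real_vector,t2_space})"
  shows "continuous_on UNIV (\<lambda>v::'a. v + b)"
proof -
  have "continuous_on UNIV (\<lambda>p::'a \<times> 'a. fst p + snd p)"
    using assms unfolding locally_convex_space_def by blast
  from lcs_comp[OF this, of "\<lambda>v. (v, b)"] show ?thesis
    by (simp add: continuous_on_Pair continuous_on_const continuous_on_id)
qed

lemma lcs_open_aff:
  assumes E: "locally_convex_space TYPE('a::{real_vector,t2_space})" and U: "open U"
  shows "open {v::'a. c *\<^sub>R (v + b) \<in> U}"
proof -
  have "continuous_on UNIV (\<lambda>v::'a. c *\<^sub>R (v + b))"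
    using lcs_comp[OF lcs_scale[OF E] lcs_trans[OF E]] .
  from open_vimage[OF U this] show ?thesis by (simp add: vimage_def)
qed

lemma lcs_absorb:
  assumes E: "locally_convex_space TYPE('a::{real_vector,t2_space})" and U: "open U" "0 \<in> U"
  shows "\<exists>e>0. \<forall>c. \<bar>c\<bar> < e \<longrightarrow> c *\<^sub>R (v::'a) \<in> U"
proof -
  have "open {c::real. c *\<^sub>R v \<in> U}"
    using open_vimage[OF U(1) lcs_scale2[OF E, of v]] by (simp add: vimage_def)
  moreover have "0 \<in> {c::real. c *\<^sub>R v \<in> U}" using U(2) by simp
  ultimately obtain e where "e > 0" "ball 0 e \<subseteq> {c::real. c *\<^sub>R v \<in> U}"
    by (meson openE)
  then have "\<forall>c. \<bar>c\<bar> < e \<longrightarrow> c *\<^sub>R v \<in> U" by (auto simp: dist_real_def subset_iff)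
  then show ?thesis using \<open>e > 0\<close> by blast
qed

lemma lcs_linear_cont:
  assumes E: "locally_convex_space TYPE('a::{real_vector,t2_space})"
    and f: "linear (f :: 'a \<Rightarrow> real)" and U: "open U" "0 \<in> U" and M: "\<And>z. z \<in> U \<Longrightarrow> f z \<le> M"
  shows "continuous_on UNIV f"
  unfolding continuous_on_topological
proof (intro ballI allI impI)
  fix x :: 'a and B assume B: "open B" "f x \<in> B"
  obtain e where e: "e > 0" "ball (f x) e \<subseteq> B" using B by (meson openE)
  have M0: "0 \<le> M" using M[OF U(2)] linear_0[OF f] by simp
  define k where "k = 2 * (M + 1) / e"
  have k: "0 < k" unfolding k_def using e M0 by simp
  define A where "A = {y. k *\<^sub>R (y + - x) \<in> U} \<inter> {y. (- k) *\<^sub>R (y + - x) \<in> U}"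
  have "open A" unfolding A_def by (intro open_Int lcs_open_aff[OF E U(1)])
  moreover have "x \<in> A" unfolding A_def using U(2) by simp
  moreover have "f y \<in> B" if "y \<in> A" for y
  proof -
    have "f (k *\<^sub>R (y + - x)) \<le> M" "f ((- k) *\<^sub>R (y + - x)) \<le> M"
      using M that unfolding A_def by auto
    then have h: "k * (f y - f x) \<le> M" "- k * (f y - f x) \<le> M"
      using f by (simp_all only: linear_add[OF f] linear_scale[OF f] linear_neg[OF f] real_scaleR_def, simp_all add: algebra_simps)
    have "e * k = 2 * (M + 1)" unfolding k_def using e by simp
    then have "M < e * k" using M0 by simp
    then have "M / k < e" using k by (simp add: divide_less_eq mult.commute)
    moreover have "f y - f x \<le> M / k" "- (f y - f x) \<le> M / k"
      using h k by (simp_all add: field_simps)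
    ultimately have "dist (f y) (f x) < e" by (simp add: dist_real_def abs_if)
    then show ?thesis using e by (auto simp: dist_commute)
  qed
  ultimately show "\<exists>A. open A \<and> x \<in> A \<and> (\<forall>y\<in>UNIV. y \<in> A \<longrightarrow> f y \<in> B)" by blast
qed



lemma conj2_le: "conj2 f a b \<le> r \<longleftrightarrow> (\<forall>x y. ereal (a x + b y) - f (x, y) \<le> r)"
  unfolding conj2_def SUP_le_iff by auto

lemma conj2_ge: "ereal (a x + b y) - f (x, y) \<le> conj2 f a b"
  unfolding conj2_def by (rule SUP_upper2[of "(x, y)"]) auto

lemma H1: "ereal a - e \<le> ereal r \<longleftrightarrow> ereal (a - r) \<le> e"
  by (cases e) auto

lemma conv_strict:
  fixes u v a a' t t' :: real
  assumes "0 \<le> u" "0 \<le> v" "u + v = 1" "a < t" "a' < t'"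
  shows "u * a + v * a' < u * t + v * t'"
proof (cases "u = 0")
  case True then show ?thesis using assms by simp
next
  case False
  then have "u * a < u * t" using assms by simp
  moreover have "v * a' \<le> v * t'" using assms by (simp add: mult_left_mono)
  ultimately show ?thesis by linarith
qed

lemma proper_real:
  assumes "proper_efun f" "f p \<noteq> \<infinity>"
  shows "\<exists>v. f p = ereal v"
  using assms unfolding proper_efun_def by (cases "f p") auto

lemma conj2_proper_gt:
  assumes "proper_efun f"
  shows "conj2 f a b \<noteq> - \<infinity>"
proof -
  obtain p where "f p \<noteq> \<infinity>" using assms unfolding proper_efun_def by blast
  then obtain v where v: "f p = ereal v" using proper_real[OF assms, of p] by blast
  have "ereal (a (fst p) + b (snd p)) - f (fst p, snd p) \<le> conj2 f a b" by (rule conj2_ge)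
  then show ?thesis using v by auto
qed

lemma epi_convex_point:
  fixes \<phi> :: "'a::real_vector \<times> 'b::real_vector \<Rightarrow> ereal"
  assumes cvx: "convex_efun \<phi>" and pr: "proper_efun \<phi>"
    and h1: "\<phi> (x, y) = ereal v" and h2: "\<phi> (x', y') = ereal v'"
    and u: "0 \<le> u" "0 \<le> w" "u + w = 1"
  obtains vv where "\<phi> (u *\<^sub>R x + w *\<^sub>R x', u *\<^sub>R y + w *\<^sub>R y') = ereal vv" "vv \<le> u * v + w * v'"
proof -
  have C: "convex {(p, r::real). \<phi> p \<le> ereal r}" using cvx unfolding convex_efun_def .
  have "u *\<^sub>R ((x, y), v) + w *\<^sub>R ((x', y'), v') \<in> {(p, r::real). \<phi> p \<le> ereal r}"
    by (rule convexD[OF C]) (use h1 h2 u in auto)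
  then have le: "\<phi> (u *\<^sub>R x + w *\<^sub>R x', u *\<^sub>R y + w *\<^sub>R y') \<le> ereal (u * v + w * v')" by simp
  then obtain vv where "\<phi> (u *\<^sub>R x + w *\<^sub>R x', u *\<^sub>R y + w *\<^sub>R y') = ereal vv"
    using proper_real[OF pr] le by force
  with le show ?thesis using that by auto
qed



theorem theorem4p2:
  fixes \<phi>1 \<phi>2 :: "'a::{real_vector,t2_space} \<times> 'b::{real_vector,t2_space} \<Rightarrow> ereal"
    and \<rho> :: "'a \<times> 'b \<Rightarrow> ereal"
  assumes E: "locally_convex_space TYPE('a)"
    and F: "locally_convex_space TYPE('b)"
    and cvx1: "convex_efun \<phi>1" and pr1: "proper_efun \<phi>1"
    and cvx2: "convex_efun \<phi>2" and pr2: "proper_efun \<phi>2"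
    and rho: "\<And>x y. \<rho> (x, y) = (INF y1. \<phi>1 (x, y1) + \<phi>2 (x, y - y1))"
    and dom2: "(x0, y0) \<in> edom \<phi>2"
    and dom1: "x0 \<in> fst ` edom \<phi>1"
    and cont: "isCont (\<lambda>x. \<phi>2 (x, y0)) x0"
    and xs: "xs \<in> topdual" and ys: "ys \<in> topdual"
  shows "conj2 \<rho> xs ys =
           Inf {conj2 \<phi>1 x1 ys + conj2 \<phi>2 x2 ys | x1 x2.
                  x1 \<in> topdual \<and> x2 \<in> topdual \<and> (\<forall>x. x1 x + x2 x = xs x)}
         \<and> (\<bar>conj2 \<rho> xs ys\<bar> \<noteq> \<infinity> \<longrightarrow>
              (\<exists>x1 x2. x1 \<in> topdual \<and> x2 \<in> topdual \<and> (\<forall>x. x1 x + x2 x = xs x) \<and>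
                  conj2 \<rho> xs ys = conj2 \<phi>1 x1 ys + conj2 \<phi>2 x2 ys))"
proof -
  have xsl: "linear xs" and xsc: "continuous_on UNIV xs" using xs unfolding topdual_def by auto
  have ysl: "linear ys" using ys unfolding topdual_def by auto
  have ysadd: "ys (a + b) = ys a + ys b" for a b using linear_add[OF ysl] .
  have ysdiff: "ys (a - b) = ys a - ys b" for a b using linear_diff[OF ysl] .
  have np1: "\<phi>1 p \<noteq> - \<infinity>" for p using pr1 unfolding proper_efun_def by blast
  have np2: "\<phi>2 p \<noteq> - \<infinity>" for p using pr2 unfolding proper_efun_def by blast
  define \<alpha> where "\<alpha> = conj2 \<rho> xs ys"
  define S where "S = {conj2 \<phi>1 x1 ys + conj2 \<phi>2 x2 ys | x1 x2.
                  x1 \<in> topdual \<and> x2 \<in> topdual \<and> (\<forall>x. x1 x + x2 x = xs x)}"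
  obtain y1 v1 where v1: "\<phi>1 (x0, y1) = ereal v1"
    using dom1 proper_real[OF pr1] unfolding edom_def by force
  obtain v0 where v0: "\<phi>2 (x0, y0) = ereal v0"
    using dom2 proper_real[OF pr2] unfolding edom_def by force
  have weak: "\<alpha> \<le> conj2 \<phi>1 x1 ys + conj2 \<phi>2 x2 ys" if sum: "\<And>x. x1 x + x2 x = xs x" for x1 x2
  proof -
    have c1: "conj2 \<phi>1 x1 ys \<noteq> - \<infinity>" and c2: "conj2 \<phi>2 x2 ys \<noteq> - \<infinity>"
      using conj2_proper_gt[OF pr1] conj2_proper_gt[OF pr2] by auto
    show ?thesis
    proof (cases "conj2 \<phi>1 x1 ys = \<infinity> \<or> conj2 \<phi>2 x2 ys = \<infinity>")
      case True then show ?thesis using c1 c2 by auto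
    next
      case False
      then obtain r1 r2 where r1: "conj2 \<phi>1 x1 ys = ereal r1" and r2: "conj2 \<phi>2 x2 ys = ereal r2"
        using c1 c2 by (cases "conj2 \<phi>1 x1 ys"; cases "conj2 \<phi>2 x2 ys") auto
      have "ereal (xs x + ys y) - \<rho> (x, y) \<le> ereal (r1 + r2)" for x y
      proof -
        have "ereal (xs x + ys y - (r1 + r2)) \<le> \<rho> (x, y)"
          unfolding rho
        proof (rule INF_greatest)
          fix z
          show "ereal (xs x + ys y - (r1 + r2)) \<le> \<phi>1 (x, z) + \<phi>2 (x, y - z)"
          proof (cases "\<phi>1 (x, z) = \<infinity> \<or> \<phi>2 (x, y - z) = \<infinity>")
            case True then show ?thesis using np1 np2 by auto
          next
            case False
            then obtain w1 w2 where w1: "\<phi>1 (x, z) = ereal w1" and w2: "\<phi>2 (x, y - z) = ereal w2"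
              using proper_real[OF pr1] proper_real[OF pr2] by blast
            have "ereal (x1 x + ys z) - \<phi>1 (x, z) \<le> ereal r1" using conj2_ge[where a=x1 and b=ys and x=x and y=z and f=\<phi>1] r1 by simp
            then have a: "x1 x + ys z - w1 \<le> r1" using w1 by simp
            have "ereal (x2 x + ys (y - z)) - \<phi>2 (x, y - z) \<le> ereal r2" using conj2_ge[where a=x2 and b=ys and x=x and y="y - z" and f=\<phi>2] r2 by simp
            then have b: "x2 x + ys (y - z) - w2 \<le> r2" using w2 by simp
            have "xs x + ys y - (r1 + r2) \<le> w1 + w2" using a b sum[of x] ysdiff[of y z] by simp
            then show ?thesis using w1 w2 by simp
          qed
        qed
        then show ?thesis using H1 by simp
      qed
      then have "\<alpha> \<le> ereal (r1 + r2)" unfolding \<alpha>_def conj2_le by blast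
      then show ?thesis using r1 r2 by simp
    qed
  qed
  have anm: "\<alpha> \<noteq> - \<infinity>"
  proof -
    have "\<rho> (x0, y1 + y0) \<le> \<phi>1 (x0, y1) + \<phi>2 (x0, y1 + y0 - y1)"
      unfolding rho by (rule INF_lower) simp
    then have le: "\<rho> (x0, y1 + y0) \<le> ereal (v1 + v0)" using v1 v0 by simp
    have "ereal (xs x0 + ys (y1 + y0)) - ereal (v1 + v0) \<le> ereal (xs x0 + ys (y1 + y0)) - \<rho> (x0, y1 + y0)"
      by (rule ereal_minus_mono[OF order_refl le])
    also have "\<dots> \<le> \<alpha>" unfolding \<alpha>_def by (rule conj2_ge)
    finally show ?thesis by auto
  qed
  have hard: "\<exists>x1 x2. x1 \<in> topdual \<and> x2 \<in> topdual \<and> (\<forall>x. x1 x + x2 x = xs x) \<and>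
                  conj2 \<phi>1 x1 ys + conj2 \<phi>2 x2 ys \<le> \<alpha>" if ninf: "\<alpha> \<noteq> \<infinity>"
  proof -
    obtain al where al: "\<alpha> = ereal al" using ninf anm by (cases \<alpha>) auto
    have KI: "xs x + ys z1 + ys z2 - al \<le> w1 + w2"
      if "\<phi>1 (x, z1) = ereal w1" "\<phi>2 (x, z2) = ereal w2" for x z1 z2 w1 w2
    proof -
      have "ereal (xs x + ys (z1 + z2)) - \<rho> (x, z1 + z2) \<le> ereal al"
        using conj2_ge[where a=xs and b=ys and x=x and y="z1 + z2" and f=\<rho>] al unfolding \<alpha>_def by simp
      then have "ereal (xs x + ys (z1 + z2) - al) \<le> \<rho> (x, z1 + z2)" using H1 by simp
      also have "\<rho> (x, z1 + z2) \<le> \<phi>1 (x, z1) + \<phi>2 (x, z1 + z2 - z1)"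
        unfolding rho by (rule INF_lower) simp
      finally show ?thesis using that ysadd by simp
    qed
    define A :: "('a \<times> real) set" where
      "A = {(x, t). \<exists>y v. \<phi>1 (x, y) = ereal v \<and> v - ys y - xs x + al < t}"
    define B :: "('a \<times> real) set" where
      "B = {(x, t). \<exists>y v. \<phi>2 (x, y) = ereal v \<and> t + v - ys y < 0}"
    have xsadd: "xs (a + b) = xs a + xs b" for a b using linear_add[OF xsl] .
    have xsscale: "xs (c *\<^sub>R a) = c * xs a" for c a using linear_scale[OF xsl] by simp
    have ysscale: "ys (c *\<^sub>R a) = c * ys a" for c a using linear_scale[OF ysl] by simp
    have disj: False if pA: "p \<in> A" and pB: "p \<in> B" for p
    proof -
      obtain x t where p: "p = (x, t)" by (cases p)
      have "(x, t) \<in> A" using pA p by simp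
      then have "\<exists>z1 w1. \<phi>1 (x, z1) = ereal w1 \<and> w1 - ys z1 - xs x + al < t"
        unfolding A_def by simp
      then obtain z1 w1 where 1: "\<phi>1 (x, z1) = ereal w1" "w1 - ys z1 - xs x + al < t"
        by blast
      obtain z2 w2 where 2: "\<phi>2 (x, z2) = ereal w2" "t + w2 - ys z2 < 0"
        using pB unfolding B_def p by auto
      show False using KI[OF 1(1) 2(1)] 1(2) 2(2) by linarith
    qed
    have cA: "convex A"
    proof (rule convexI)
      fix p q :: "'a \<times> real" and u w :: real
      assume p: "p \<in> A" and q: "q \<in> A" and u: "0 \<le> u" "0 \<le> w" "u + w = 1"
      obtain x t where pp: "p = (x, t)" by (cases p)
      obtain x' t' where qq: "q = (x', t')" by (cases q)
      obtain y v where yv: "\<phi>1 (x, y) = ereal v" "v - ys y - xs x + al < t"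
        using p unfolding A_def pp by auto
      obtain y' v' where yv': "\<phi>1 (x', y') = ereal v'" "v' - ys y' - xs x' + al < t'"
        using q unfolding A_def qq by auto
      obtain vv where vv: "\<phi>1 (u *\<^sub>R x + w *\<^sub>R x', u *\<^sub>R y + w *\<^sub>R y') = ereal vv" "vv \<le> u * v + w * v'"
        by (rule epi_convex_point[OF cvx1 pr1 yv(1) yv'(1) u])
      have wu: "w = 1 - u" using u(3) by simp
      have "u * (v - ys y - xs x + al) + w * (v' - ys y' - xs x' + al) < u * t + w * t'"
        by (rule conv_strict[OF u yv(2) yv'(2)])
      moreover have "u * (v - ys y - xs x + al) + w * (v' - ys y' - xs x' + al)
          = (u * v + w * v') - (u * ys y + w * ys y') - (u * xs x + w * xs x') + al"
        by (simp add: wu algebra_simps)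
      moreover have "ys (u *\<^sub>R y + w *\<^sub>R y') = u * ys y + w * ys y'" by (simp only: ysadd ysscale)
      moreover have "xs (u *\<^sub>R x + w *\<^sub>R x') = u * xs x + w * xs x'" by (simp only: xsadd xsscale)
      ultimately have "vv - ys (u *\<^sub>R y + w *\<^sub>R y') - xs (u *\<^sub>R x + w *\<^sub>R x') + al < u * t + w * t'"
        using vv(2) by linarith
      then show "u *\<^sub>R p + w *\<^sub>R q \<in> A" unfolding A_def pp qq using vv(1) by auto
    qed
    have cB: "convex B"
    proof (rule convexI)
      fix p q :: "'a \<times> real" and u w :: real
      assume p: "p \<in> B" and q: "q \<in> B" and u: "0 \<le> u" "0 \<le> w" "u + w = 1"
      obtain x t where pp: "p = (x, t)" by (cases p)
      obtain x' t' where qq: "q = (x', t')" by (cases q)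
      obtain y v where yv: "\<phi>2 (x, y) = ereal v" "t + v - ys y < 0"
        using p unfolding B_def pp by auto
      obtain y' v' where yv': "\<phi>2 (x', y') = ereal v'" "t' + v' - ys y' < 0"
        using q unfolding B_def qq by auto
      obtain vv where vv: "\<phi>2 (u *\<^sub>R x + w *\<^sub>R x', u *\<^sub>R y + w *\<^sub>R y') = ereal vv" "vv \<le> u * v + w * v'"
        by (rule epi_convex_point[OF cvx2 pr2 yv(1) yv'(1) u])
      have wu: "w = 1 - u" using u(3) by simp
      have "u * (t + v - ys y) + w * (t' + v' - ys y') < u * 0 + w * 0"
        by (rule conv_strict[OF u yv(2) yv'(2)])
      moreover have "u * (t + v - ys y) + w * (t' + v' - ys y')
          = (u * t + w * t') + (u * v + w * v') - (u * ys y + w * ys y')"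
        by (simp add: algebra_simps)
      moreover have "ys (u *\<^sub>R y + w *\<^sub>R y') = u * ys y + w * ys y'" by (simp only: ysadd ysscale)
      ultimately have "(u * t + w * t') + vv - ys (u *\<^sub>R y + w *\<^sub>R y') < 0"
        using vv(2) by linarith
      then show "u *\<^sub>R p + w *\<^sub>R q \<in> B" unfolding B_def pp qq using vv(1) by auto
    qed
    define s0 where "s0 = v1 - ys y1 - xs x0 + al + 1"
    define t0 where "t0 = ys y0 - v0 - 2"
    have a0: "(x0, s0) \<in> A" unfolding A_def s0_def using v1 by (auto intro!: exI[of _ y1])
    have b0: "(x0, t0) \<in> B" unfolding B_def t0_def using v0 by (auto intro!: exI[of _ y0])
    have ca: "continuous (at x0) (\<lambda>x. \<phi>2 (x, y0))" using cont .
    have oo: "open {..<ereal (v0 + 1)} \<and> \<phi>2 (x0, y0) \<in> {..<ereal (v0 + 1)}" using v0 by simp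
    have "\<exists>S. open S \<and> x0 \<in> S \<and> (\<forall>x'\<in>S. \<phi>2 (x', y0) \<in> {..<ereal (v0 + 1)})"
      using continuous_at_open[THEN iffD1, OF ca, rule_format, OF oo] .
    then obtain U where U: "open U" "x0 \<in> U" "\<And>x. x \<in> U \<Longrightarrow> \<phi>2 (x, y0) \<in> {..<ereal (v0 + 1)}"
      by blast
    have Bnear: "(x, t) \<in> B" if "x \<in> U" "t < ys y0 - v0 - 1" for x t
    proof -
      have lt: "\<phi>2 (x, y0) < ereal (v0 + 1)" using U(3)[OF that(1)] by simp
      then have "\<phi>2 (x, y0) \<noteq> \<infinity>" by auto
      then obtain v where v: "\<phi>2 (x, y0) = ereal v" using proper_real[OF pr2, of "(x, y0)"] by blast
      then have "v < v0 + 1" using lt by simp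
      then show ?thesis unfolding B_def using v that(2) by (auto intro!: exI[of _ y0])
    qed
    define wv where "wv = (x0, s0) - (x0, t0)"
    have wv: "wv = (0, s0 - t0)" unfolding wv_def by simp
    define K where "K = {b - a + wv | a b. a \<in> A \<and> b \<in> B}"
    have cK: "convex K"
    proof (rule convexI)
      fix p q :: "'a \<times> real" and u w :: real
      assume p: "p \<in> K" and q: "q \<in> K" and u: "0 \<le> u" "0 \<le> w" "u + w = 1"
      obtain a b where ab: "a \<in> A" "b \<in> B" "p = b - a + wv" using p unfolding K_def by auto
      obtain a' b' where ab': "a' \<in> A" "b' \<in> B" "q = b' - a' + wv" using q unfolding K_def by auto
      have wu: "w = 1 - u" using u(3) by simp
      have "u *\<^sub>R p + w *\<^sub>R q = (u *\<^sub>R b + w *\<^sub>R b') - (u *\<^sub>R a + w *\<^sub>R a') + wv"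
        unfolding ab(3) ab'(3) wu by (simp add: algebra_simps)
      moreover have "u *\<^sub>R a + w *\<^sub>R a' \<in> A" by (rule convexD[OF cA ab(1) ab'(1) u])
      moreover have "u *\<^sub>R b + w *\<^sub>R b' \<in> B" by (rule convexD[OF cB ab(2) ab'(2) u])
      ultimately show "u *\<^sub>R p + w *\<^sub>R q \<in> K" unfolding K_def by blast
    qed
    have K0: "0 \<in> K" unfolding K_def mem_Collect_eq
      by (rule exI[of _ "(x0, s0)"], rule exI[of _ "(x0, t0)"]) (use a0 b0 in \<open>simp add: wv_def zero_prod_def\<close>)
    have wK: "wv \<notin> K"
    proof
      assume "wv \<in> K"
      then obtain a b where ab: "a \<in> A" "b \<in> B" "wv = b - a + wv" unfolding K_def by blast
      then have "b = a" by (simp add: algebra_simps)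
      then show False using disj[of a] ab by simp
    qed
    define U0 where "U0 = {z. (1::real) *\<^sub>R (z + x0) \<in> U}"
    have U0: "open U0" "0 \<in> U0" unfolding U0_def using lcs_open_aff[OF E U(1), of 1 x0] U(2) by simp_all
    have inK: "(z, r) \<in> K" if "z \<in> U0" "r < 1" for z r
    proof -
      have "(z + x0, r + t0) \<in> B" by (rule Bnear) (use that in \<open>auto simp: U0_def t0_def\<close>)
      moreover have "(z, r) = (z + x0, r + t0) - (x0, s0) + wv" unfolding wv by simp
      ultimately show ?thesis unfolding K_def using a0 by blast
    qed
    have absorb: "\<exists>c>0. c *\<^sub>R v \<in> K" for v
    proof -
      obtain z r where v: "v = (z, r)" by (cases v)
      obtain e where e: "e > 0" "\<And>c. \<bar>c\<bar> < e \<Longrightarrow> c *\<^sub>R z \<in> U0"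
        using lcs_absorb[OF E U0] by blast
      define c where "c = min (e / 2) (1 / (\<bar>r\<bar> + 1))"
      have c: "0 < c" "c \<le> e / 2" "c \<le> 1 / (\<bar>r\<bar> + 1)" unfolding c_def using e by auto
      have "c * (\<bar>r\<bar> + 1) \<le> 1" using c(3) by (simp add: field_simps)
      then have "c * \<bar>r\<bar> < 1" using c(1) by (simp add: algebra_simps)
      moreover have "c * r \<le> c * \<bar>r\<bar>" using c(1) by (simp add: mult_left_mono)
      ultimately have "c * r < 1" by linarith
      moreover have "c *\<^sub>R z \<in> U0" using e c by auto
      ultimately have "c *\<^sub>R v \<in> K" unfolding v using inK by simp
      then show ?thesis using c(1) by blast
    qed
    obtain \<Lambda> :: "'a \<times> real \<Rightarrow> real" where \<Lambda>: "linear \<Lambda>" "\<And>k. k \<in> K \<Longrightarrow> \<Lambda> k \<le> 1" "1 \<le> \<Lambda> wv"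
      using SEP[OF cK K0 absorb wK] by blast
    have sepL: "\<Lambda> b \<le> \<Lambda> a" if "a \<in> A" "b \<in> B" for a b
    proof -
      have "\<Lambda> (b - a + wv) \<le> 1" using \<Lambda>(2) that unfolding K_def by blast
      then show ?thesis using \<Lambda>(3) linear_add[OF \<Lambda>(1)] linear_diff[OF \<Lambda>(1)] by simp
    qed
    define l where "l = (\<lambda>z. \<Lambda> (z, 0))"
    define c where "c = \<Lambda> (0, 1)"
    have dec: "\<Lambda> (x, t) = l x + c * t" for x t
    proof -
      have "(x, t) = (x, 0) + t *\<^sub>R (0, 1)" by simp
      then have "\<Lambda> (x, t) = \<Lambda> (x, 0) + t *\<^sub>R \<Lambda> (0, 1)"
        using linear_add[OF \<Lambda>(1)] linear_scale[OF \<Lambda>(1)] by metis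
      then show ?thesis unfolding l_def c_def by simp
    qed
    have L00: "\<Lambda> (0, 0) = 0" using linear_0[OF \<Lambda>(1)] by (simp add: zero_prod_def)
    have cw: "1 \<le> c * (s0 - t0)" using \<Lambda>(3) unfolding wv dec by (simp add: l_def L00)
    have cpos: "0 < c"
    proof (rule ccontr)
      assume "\<not> 0 < c"
      then have cn: "c < 0" using cw by (cases "c = 0") auto
      define T where "T = max s0 t0 + 1"
      have "(x0, T) \<in> A" unfolding A_def T_def s0_def using v1 by (auto intro!: exI[of _ y1])
      then have "\<Lambda> (x0, t0) \<le> \<Lambda> (x0, T)" using sepL b0 by blast
      then have "c * t0 \<le> c * T" unfolding dec by simp
      then have "T \<le> t0" using cn by simp
      then show False unfolding T_def by simp
    qed
    define lam where "lam = (\<lambda>z. l z / c)"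
    have laml: "linear lam"
    proof (rule linearI)
      show "lam (b1 + b2) = lam b1 + lam b2" for b1 b2
        unfolding lam_def l_def using linear_add[OF \<Lambda>(1), of "(b1, 0)" "(b2, 0)"] by (simp add: add_divide_distrib)
      show "lam (r *\<^sub>R b) = r *\<^sub>R lam b" for r b
        unfolding lam_def l_def using linear_scale[OF \<Lambda>(1), of r "(b, 0)"] by simp
    qed
    have lamb: "lam z \<le> 1 / c" if "z \<in> U0" for z
    proof -
      have "l z \<le> 1" unfolding l_def using \<Lambda>(2) inK[OF that] by simp
      then show ?thesis unfolding lam_def using cpos by (simp add: divide_right_mono)
    qed
    have lamc: "continuous_on UNIV lam" by (rule lcs_linear_cont[OF E laml U0 lamb])
    have seplam: "lam x' + t' \<le> lam x + t" if "(x, t) \<in> A" "(x', t') \<in> B" for x t x' t'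
    proof -
      have "l x' + c * t' \<le> l x + c * t" using sepL[OF that] unfolding dec .
      then have "(l x' + c * t') / c \<le> (l x + c * t) / c" using cpos by (simp add: divide_right_mono)
      then show ?thesis unfolding lam_def using cpos by (simp add: add_divide_distrib)
    qed
    define \<beta> where "\<beta> = Sup ((\<lambda>p. lam (fst p) + snd p) ` B)"
    have bbB: "bdd_above ((\<lambda>p. lam (fst p) + snd p) ` B)"
      unfolding bdd_above_def using seplam[OF a0] by force
    have Bb: "lam x' + t' \<le> \<beta>" if "(x', t') \<in> B" for x' t'
      unfolding \<beta>_def using cSup_upper[OF _ bbB, of "lam x' + t'"] that by force
    have Ab: "\<beta> \<le> lam x + t" if "(x, t) \<in> A" for x t
      unfolding \<beta>_def using b0 seplam[OF that] by (intro cSup_least) auto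
    define x1 where "x1 = (\<lambda>x. xs x - lam x)"
    have x1t: "x1 \<in> topdual"
    proof -
      have "linear x1" unfolding x1_def
        by (rule linearI) (simp_all add: linear_add[OF xsl] linear_add[OF laml] linear_scale[OF xsl] linear_scale[OF laml] algebra_simps)
      moreover have "continuous_on UNIV x1" unfolding x1_def by (intro continuous_on_diff xsc lamc)
      ultimately show ?thesis unfolding topdual_def by simp
    qed
    have x2t: "lam \<in> topdual" unfolding topdual_def using laml lamc by simp
    have C1: "conj2 \<phi>1 x1 ys \<le> ereal (al - \<beta>)"
      unfolding conj2_le H1
    proof (intro allI)
      fix x y
      show "ereal (x1 x + ys y - (al - \<beta>)) \<le> \<phi>1 (x, y)"
      proof (cases "\<phi>1 (x, y) = \<infinity>")
        case True then show ?thesis by simp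
      next
        case False
        then obtain v where v: "\<phi>1 (x, y) = ereal v" using proper_real[OF pr1] by blast
        have "\<beta> \<le> lam x + (v - ys y - xs x + al) + e" if "0 < e" for e
        proof -
          have "(x, v - ys y - xs x + al + e) \<in> A" unfolding A_def using v that by (auto intro!: exI[of _ y])
          then show ?thesis using Ab by force
        qed
        then have "\<beta> \<le> lam x + (v - ys y - xs x + al)" by (rule field_le_epsilon)
        then show ?thesis unfolding v x1_def by simp
      qed
    qed
    have C2: "conj2 \<phi>2 lam ys \<le> ereal \<beta>"
      unfolding conj2_le H1
    proof (intro allI)
      fix x y
      show "ereal (lam x + ys y - \<beta>) \<le> \<phi>2 (x, y)"
      proof (cases "\<phi>2 (x, y) = \<infinity>")
        case True then show ?thesis by simp
      next
        case False
        then obtain v where v: "\<phi>2 (x, y) = ereal v" using proper_real[OF pr2] by blast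
        have "lam x + ys y - v \<le> \<beta> + e" if "0 < e" for e
        proof -
          have "(x, ys y - v - e) \<in> B" unfolding B_def using v that by (auto intro!: exI[of _ y])
          then show ?thesis using Bb by force
        qed
        then have "lam x + ys y - v \<le> \<beta>" by (rule field_le_epsilon)
        then show ?thesis unfolding v by simp
      qed
    qed
    have "conj2 \<phi>1 x1 ys + conj2 \<phi>2 lam ys \<le> ereal (al - \<beta>) + ereal \<beta>" by (rule add_mono[OF C1 C2])
    then have "conj2 \<phi>1 x1 ys + conj2 \<phi>2 lam ys \<le> \<alpha>" using al by simp
    moreover have "\<forall>x. x1 x + lam x = xs x" unfolding x1_def by simp
    ultimately show ?thesis using x1t x2t by blast
  qed
  have infeq: "\<alpha> = Inf S"
  proof (rule antisym)
    show "\<alpha> \<le> Inf S" unfolding S_def by (rule Inf_greatest) (use weak in auto)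
    show "Inf S \<le> \<alpha>"
    proof (cases "\<alpha> = \<infinity>")
      case True then show ?thesis by simp
    next
      case False
      then obtain x1 x2 where "x1 \<in> topdual" "x2 \<in> topdual" "\<forall>x. x1 x + x2 x = xs x"
        "conj2 \<phi>1 x1 ys + conj2 \<phi>2 x2 ys \<le> \<alpha>" using hard by blast
      then have "conj2 \<phi>1 x1 ys + conj2 \<phi>2 x2 ys \<in> S" "conj2 \<phi>1 x1 ys + conj2 \<phi>2 x2 ys \<le> \<alpha>"
        unfolding S_def by blast+
      then show ?thesis by (rule Inf_lower2)
    qed
  qed
  have att: "\<exists>x1 x2. x1 \<in> topdual \<and> x2 \<in> topdual \<and> (\<forall>x. x1 x + x2 x = xs x) \<and>
                  \<alpha> = conj2 \<phi>1 x1 ys + conj2 \<phi>2 x2 ys" if "\<bar>\<alpha>\<bar> \<noteq> \<infinity>"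
  proof -
    have "\<alpha> \<noteq> \<infinity>" using that by auto
    then obtain x1 x2 where "x1 \<in> topdual" "x2 \<in> topdual" "\<forall>x. x1 x + x2 x = xs x"
        "conj2 \<phi>1 x1 ys + conj2 \<phi>2 x2 ys \<le> \<alpha>" using hard by blast
    moreover then have "\<alpha> \<le> conj2 \<phi>1 x1 ys + conj2 \<phi>2 x2 ys" using weak by blast
    ultimately show ?thesis by (intro exI[of _ x1] exI[of _ x2]) auto
  qed
  show ?thesis using infeq att unfolding \<alpha>_def S_def by blast
qed

end
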